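(* For any online learning algorithm with prior knowledge of the horizon $T$, the delay $\tau$ and a number $\bar V\ge V^{\tau+1}_T$, there exists a sequence of linear losses $f_t(x)=\langle g_t,x\rangle$ such that, if the feedback is subject to constant delay $\tau$ (the feedback $g_t$ becomes available only after $\tau$ further rounds), the regret $\sum_{t=1}^T\langle g_t,x_t-p\rangle$ of the algorithm on this sequence with respect to some vector $p$ with $\|p-x_1\|\le1$ is $\Omega(\sqrt{\tau\bar V})$.
   Context: Online linear optimization in a Euclidean space (unconstrained), where $x_t$ denotes the point played at round $t$ and $x_1$ the initial point. Convention $g_t=0$ for $t\le0$. The $(\tau+1)$-variation is $V^{\tau+1}_T=\sum_{t=1}^T\|g_t-g_{t-\tau-1}\|^2$. *)

theory Defs
  imports "HOL-Analysis.Analysis"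
begin

text \<open>A deterministic online algorithm (which may depend on the known T, tau, Vbar) is a map
  A t obs giving the point x_t played at round t from the list of feedback gradients
  observed so far. Under constant delay tau, at round t only g_1, ..., g_{t-tau-1} are
  available. Rounds are indexed 1, 2, ...; the value g 0 is never used.\<close>

definition delayed_play :: "(nat \<Rightarrow> 'a list \<Rightarrow> 'a) \<Rightarrow> nat \<Rightarrow> (nat \<Rightarrow> 'a) \<Rightarrow> nat \<Rightarrow> 'a" where
  "delayed_play A \<tau> g t = A t (map g [1..<t - \<tau>])"

definition delayed_regret ::
  "(nat \<Rightarrow> 'a::real_inner list \<Rightarrow> 'a) \<Rightarrow> nat \<Rightarrow> nat \<Rightarrow> (nat \<Rightarrow> 'a) \<Rightarrow> 'a \<Rightarrow> real" where
  "delayed_regret A \<tau> T g p = (\<Sum>t=1..T. inner (g t) (delayed_play A \<tau> g t - p))"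

definition variation :: "nat \<Rightarrow> nat \<Rightarrow> (nat \<Rightarrow> 'a::real_normed_vector) \<Rightarrow> real" where
  "variation \<tau> T g = (\<Sum>t=1..T. (norm (g t - (if t > \<tau> + 1 then g (t - \<tau> - 1) else 0)))\<^sup>2)"

end

theory Submission
  imports Defs
begin

lemma main_bound:
  fixes T \<tau> :: nat and Vbar :: real and A :: "nat \<Rightarrow> 'a::euclidean_space list \<Rightarrow> 'a"
  assumes T: "\<tau> < T" and V: "0 \<le> Vbar"
  shows "\<exists>(g :: nat \<Rightarrow> 'a) (p :: 'a).
        variation \<tau> T g \<le> Vbar \<and>
        norm (p - delayed_play A \<tau> g 1) \<le> 1 \<and>
        delayed_regret A \<tau> T g p \<ge> (1/2) * sqrt (real \<tau> * Vbar)"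
proof -
  define e :: 'a where "e = (SOME b. b \<in> Basis)"
  have eB: "e \<in> Basis" unfolding e_def by (rule someI_ex) (use nonempty_Basis in blast)
  have ne: "norm e = 1" using eB by simp
  define S where "S = (\<Sum>t=1..\<tau>+1. A t [] - A 1 [])"
  define u where "u = (if inner e S \<ge> 0 then e else - e)"
  have nu: "norm u = 1" using ne unfolding u_def by auto
  have uu: "inner u u = 1" using nu by (simp add: norm_eq_sqrt_inner)
  have uS: "inner u S \<ge> 0" unfolding u_def by auto
  define \<epsilon> where "\<epsilon> = sqrt (Vbar / (2 * real \<tau> + 2))"
  have eps0: "\<epsilon> \<ge> 0" unfolding \<epsilon>_def using V by simp
  have eps2: "\<epsilon>\<^sup>2 = Vbar / (2 * real \<tau> + 2)" unfolding \<epsilon>_def using V by simp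
  define g :: "nat \<Rightarrow> 'a" where "g t = (if t \<le> \<tau> + 1 then \<epsilon> *\<^sub>R u else 0)" for t
  define p where "p = A 1 [] - u"
  have play: "delayed_play A \<tau> g t = A t []" if "t \<le> \<tau> + 1" for t
    using that unfolding delayed_play_def by simp
  have term_eq: "(norm (g t - (if t > \<tau> + 1 then g (t - \<tau> - 1) else 0)))\<^sup>2
      = (if t \<le> 2*\<tau>+2 then \<epsilon>\<^sup>2 else 0)" if "t \<ge> 1" for t
    using that nu eps0 unfolding g_def by (auto simp: norm_minus_commute)
  have "variation \<tau> T g = (\<Sum>t=1..T. (if t \<le> 2*\<tau>+2 then \<epsilon>\<^sup>2 else 0))"
    unfolding variation_def by (rule sum.cong[OF refl], rule term_eq) auto
  also have "\<dots> = (\<Sum>t\<in>{t\<in>{1..T}. t \<le> 2*\<tau>+2}. \<epsilon>\<^sup>2)"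
    by (rule sum.inter_filter[symmetric]) simp
  also have "\<dots> = real (card ({t\<in>{1..T}. t \<le> 2*\<tau>+2})) * \<epsilon>\<^sup>2" by simp
  also have "\<dots> \<le> real (2*\<tau>+2) * \<epsilon>\<^sup>2"
  proof -
    have "{t\<in>{1..T}. t \<le> 2*\<tau>+2} \<subseteq> {1..2*\<tau>+2}" by auto
    hence "card ({t\<in>{1..T}. t \<le> 2*\<tau>+2}) \<le> 2*\<tau>+2"
      using card_mono[of "{1..2*\<tau>+2}"] by fastforce
    thus ?thesis by (intro mult_right_mono) auto
  qed
  also have "\<dots> = Vbar" using eps2 by (simp add: field_simps)
  finally have var: "variation \<tau> T g \<le> Vbar" .
  have np: "norm (p - delayed_play A \<tau> g 1) \<le> 1" using play[of 1] nu by (simp add: p_def)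
  have "delayed_regret A \<tau> T g p = (\<Sum>t=1..\<tau>+1. inner (g t) (delayed_play A \<tau> g t - p))"
    unfolding delayed_regret_def
    by (rule sum.mono_neutral_right) (use T in \<open>auto simp: g_def\<close>)
  also have "\<dots> = (\<Sum>t=1..\<tau>+1. \<epsilon> * (inner u (A t [] - A 1 []) + 1))"
    by (rule sum.cong) (auto simp: play g_def p_def inner_diff_right uu algebra_simps)
  also have "\<dots> = \<epsilon> * (inner u S + (real \<tau> + 1))"
  proof -
    have "inner u S = (\<Sum>t=1..\<tau>+1. inner u (A t [] - A 1 []))"
      unfolding S_def by (rule inner_sum_right)
    thus ?thesis by (simp only: sum_distrib_left[symmetric] sum.distrib) simp
  qed
  also have "\<dots> \<ge> \<epsilon> * (real \<tau> + 1)" using uS eps0 by (intro mult_left_mono) auto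
  finally have reg: "delayed_regret A \<tau> T g p \<ge> \<epsilon> * (real \<tau> + 1)" .
  have "(1/2) * sqrt (real \<tau> * Vbar) = sqrt (real \<tau> * Vbar / 4)"
    by (simp add: real_sqrt_divide)
  also have "\<dots> \<le> sqrt (Vbar * (real \<tau> + 1) / 2)"
    using V by (intro real_sqrt_le_mono) (simp add: field_simps mult_left_mono)
  also have "\<dots> = \<epsilon> * (real \<tau> + 1)"
  proof -
    have "\<epsilon> * (real \<tau> + 1) = sqrt ((\<epsilon> * (real \<tau> + 1))\<^sup>2)" using eps0 by simp
    also have "(\<epsilon> * (real \<tau> + 1))\<^sup>2 = Vbar * (real \<tau> + 1) / 2"
    proof -
      have h: "\<epsilon>\<^sup>2 * (2 * real \<tau> + 2) = Vbar" using eps2 by (simp add: field_simps)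
      have "(\<epsilon> * (real \<tau> + 1))\<^sup>2 = \<epsilon>\<^sup>2 * (2 * real \<tau> + 2) * (real \<tau> + 1) / 2"
        by (simp add: power2_eq_square algebra_simps)
      thus ?thesis using h by simp
    qed
    finally show ?thesis by simp
  qed
  finally show ?thesis using var np reg by (intro exI[of _ g] exI[of _ p]) auto
qed

theorem proposition6:
  shows "\<exists>c>0. \<forall>(T::nat) (\<tau>::nat) (Vbar::real) (A :: nat \<Rightarrow> 'a::euclidean_space list \<Rightarrow> 'a).
     \<tau> < T \<longrightarrow> 0 \<le> Vbar \<longrightarrow>
     (\<exists>(g :: nat \<Rightarrow> 'a) (p :: 'a).
        variation \<tau> T g \<le> Vbar \<and>
        norm (p - delayed_play A \<tau> g 1) \<le> 1 \<and>
        delayed_regret A \<tau> T g p \<ge> c * sqrt (real \<tau> * Vbar))"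
proof (intro exI[of _ "1/2::real"] conjI allI impI)
  fix T \<tau> :: nat and Vbar :: real and A :: "nat \<Rightarrow> 'a::euclidean_space list \<Rightarrow> 'a"
  assume "\<tau> < T" "0 \<le> Vbar"
  thus "\<exists>(g :: nat \<Rightarrow> 'a) (p :: 'a).
        variation \<tau> T g \<le> Vbar \<and>
        norm (p - delayed_play A \<tau> g 1) \<le> 1 \<and>
        delayed_regret A \<tau> T g p \<ge> (1/2) * sqrt (real \<tau> * Vbar)" by (rule main_bound)
qed simp

end
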